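(* Let $\ell\ge2$ and $k\ge1$, and let $\lambda$ be an $\ell$-core with exactly $k$ nonzero parts. Then: (1) in each row of $\lambda$, exactly one of the boxes deleted in forming $\widetilde{\Phi_\ell^k}(\lambda)$ is a skew box of $\lambda$ with respect to $\ell$; (2) if $\mathsf{B}$ is a box of $\lambda$ that is not deleted, and $\widetilde{\mathsf{B}}$ is the corresponding box of $\widetilde{\Phi_\ell^k}(\lambda)$, then $\mathsf{B}$ is a skew box of $\lambda$ with respect to $\ell$ if and only if $\widetilde{\mathsf{B}}$ is a skew box of $\widetilde{\Phi_\ell^k}(\lambda)$ with respect to $\ell-1$.
   Context: Partitions are in English notation; box $(x,y)$ is in row $x$, column $y$. The hook length $h^\mu_{\mathsf{B}}$ of a box $\mathsf{B}=(a,c)$ of $\mu$ is the number of boxes of $\mu$ in row $a$ weakly right of $\mathsf{B}$ plus the number in column $c$ strictly below $\mathsf{B}$. An $m$-core is a partition none of whose hook lengths is divisible by $m$. For a partition $\mu$ and integer $m$, a box $\mathsf{B}$ of $\mu$ is a skew box with respect to $m$ if $h^\mu_{\mathsf{B}}\le m$ (i.e. it is not among the boxes of hook length $>m$). For an $\ell$-core $\lambda$ with $k$ nonzero parts, $\widetilde{\Phi_\ell^k}(\lambda)$ is obtained from the diagram of $\lambda$ by deleting every column $y$ with $h^\lambda_{(1,y)}\equiv h^\lambda_{(1,1)}\pmod\ell$ (in particular column 1) and shifting the remaining columns left, preserving their order; each non-deleted box $\mathsf{B}$ of $\lambda$ thereby corresponds to a box $\widetilde{\mathsf{B}}$ of $\widetilde{\Phi_\ell^k}(\lambda)$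 in the same row. Equivalently, $\widetilde{\Phi_\ell^k}(\lambda)$ is the transpose of $\Phi_\ell^k(\lambda^{tr})$, where for an $\ell$-core $\nu$ with first part $k$, $\Phi_\ell^k(\nu)$ deletes all rows $x$ of $\nu$ with $h^\nu_{(x,1)}\equiv h^\nu_{(1,1)}\pmod\ell$. It is known that $\widetilde{\Phi_\ell^k}(\lambda)$ is an $(\ell-1)$-core with at most $k$ nonzero parts. *)

theory Defs
  imports Main
begin

text \<open>A partition is a list of its parts (English notation, 1-indexed rows);
  row x = x-th part (0 beyond the list). Boxes are pairs (row, column), 1-indexed.\<close>

definition row :: "nat list \<Rightarrow> nat \<Rightarrow> nat" where
  "row lam x = (if 1 \<le> x \<and> x \<le> length lam then lam ! (x - 1) else 0)"

definition is_partition :: "nat list \<Rightarrow> bool" where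
  "is_partition lam \<longleftrightarrow> sorted (rev lam) \<and> 0 \<notin> set lam"

definition in_diagram :: "nat list \<Rightarrow> nat \<times> nat \<Rightarrow> bool" where
  "in_diagram lam B \<longleftrightarrow> 1 \<le> fst B \<and> 1 \<le> snd B \<and> snd B \<le> row lam (fst B)"

definition col :: "nat list \<Rightarrow> nat \<Rightarrow> nat" where
  "col lam c = length (filter (\<lambda>r. c \<le> r) lam)"

definition hook :: "nat list \<Rightarrow> nat \<times> nat \<Rightarrow> nat" where
  "hook lam B = (row lam (fst B) - snd B + 1) + (col lam (snd B) - fst B)"

definition is_core :: "nat \<Rightarrow> nat list \<Rightarrow> bool" where
  "is_core m lam \<longleftrightarrow> (\<forall>B. in_diagram lam B \<longrightarrow> \<not> m dvd hook lam B)"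

definition skew_box :: "nat \<Rightarrow> nat list \<Rightarrow> nat \<times> nat \<Rightarrow> bool" where
  "skew_box m lam B \<longleftrightarrow> in_diagram lam B \<and> hook lam B \<le> m"

definition deleted_cols :: "nat \<Rightarrow> nat list \<Rightarrow> nat set" where
  "deleted_cols l lam = {y. 1 \<le> y \<and> y \<le> row lam 1 \<and>
      hook lam (1, y) mod l = hook lam (1, 1) mod l}"

text \<open>tilde-Phi: delete those columns and shift remaining ones left
  (rows that become empty are kept as zero parts; they contribute no boxes).\<close>
definition phi_tilde :: "nat \<Rightarrow> nat list \<Rightarrow> nat list" where
  "phi_tilde l lam = map (\<lambda>r. r - card {y \<in> deleted_cols l lam. y \<le> r}) lam"

definition box_map :: "nat \<Rightarrow> nat list \<Rightarrow> nat \<times> nat \<Rightarrow> nat \<times> nat" where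
  "box_map l lam B = (fst B, snd B - card {y' \<in> deleted_cols l lam. y' < snd B})"

end

theory Submission
  imports Defs
begin

lemma row_mono:
  assumes "is_partition lam" "1 \<le> x1" "x1 \<le> x2"
  shows "row lam x2 \<le> row lam x1"
  using assms sorted_rev_nth_mono[of lam "x1 - 1" "x2 - 1"]
  unfolding row_def is_partition_def by auto

lemma row_pos:
  assumes "is_partition lam" "1 \<le> x" "x \<le> length lam"
  shows "1 \<le> row lam x"
proof -
  have "lam ! (x - 1) \<in> set lam" using assms by auto
  then show ?thesis using assms unfolding row_def is_partition_def
    by (metis less_one not_less)
qed

lemma col_anti:
  assumes "c1 \<le> c2" shows "col lam c2 \<le> col lam c1"
  unfolding col_def using assms
  by (induction lam) auto

lemma conj:
  assumes "is_partition lam" "1 \<le> x" "1 \<le> c"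
  shows "x \<le> col lam c \<longleftrightarrow> c \<le> row lam x"
proof
  let ?S = "{i. i < length lam \<and> c \<le> lam ! i}"
  have cc: "col lam c = card ?S" unfolding col_def by (rule length_filter_conv_card)
  assume "x \<le> col lam c"
  show "c \<le> row lam x"
  proof (rule ccontr)
    assume nc: "\<not> c \<le> row lam x"
    have "?S \<subseteq> {0..<x-1}"
    proof
      fix i assume "i \<in> ?S"
      then have i: "i < length lam" "c \<le> lam ! i" by auto
      show "i \<in> {0..<x-1}"
      proof (rule ccontr)
        assume "i \<notin> {0..<x-1}"
        then have "x - 1 \<le> i" by auto
        then have "lam ! i \<le> lam ! (x-1)" "x \<le> length lam"
          using sorted_rev_nth_mono[of lam "x-1" i] assms i unfolding is_partition_def by auto
        then show False using nc i assms unfolding row_def by auto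
      qed
    qed
    then have "card ?S \<le> x - 1" by (metis card_atLeastLessThan card_mono finite_atLeastLessThan diff_zero)
    then show False using \<open>x \<le> col lam c\<close> cc assms by auto
  qed
next
  let ?S = "{i. i < length lam \<and> c \<le> lam ! i}"
  have cc: "col lam c = card ?S" unfolding col_def by (rule length_filter_conv_card)
  assume h: "c \<le> row lam x"
  then have xl: "x \<le> length lam" using assms unfolding row_def by (auto split: if_splits)
  have "{0..<x} \<subseteq> ?S"
  proof
    fix i assume "i \<in> {0..<x}"
    then have "i \<le> x - 1" "i < length lam" using xl by auto
    then have "lam ! (x-1) \<le> lam ! i"
      using sorted_rev_nth_mono[of lam i "x-1"] assms xl unfolding is_partition_def by auto
    then show "i \<in> ?S" using h assms xl \<open>i < length lam\<close> unfolding row_def by auto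
  qed
  then have "x \<le> card ?S" by (metis card_atLeastLessThan card_mono finite_Collect_conjI finite_lessThan lessThan_def diff_zero finite_Collect_less_nat)
  then show "x \<le> col lam c" using cc by simp
qed

lemma hook_int:
  assumes "is_partition lam" "in_diagram lam (x,y)"
  shows "int (hook lam (x,y)) = int (row lam x) - int y + 1 + int (col lam y) - int x"
proof -
  have "x \<le> col lam y" using conj[of lam x y] assms unfolding in_diagram_def by auto
  then show ?thesis using assms unfolding hook_def in_diagram_def by auto
qed

lemma hook_dec:
  assumes "is_partition lam" "in_diagram lam (x,z1)" "in_diagram lam (x,z2)" "z1 < z2"
  shows "hook lam (x,z2) < hook lam (x,z1)"
  using hook_int[OF assms(1,2)] hook_int[OF assms(1,3)] col_anti[of z1 z2 lam] assms(4) by linarith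

lemma hook_le:
  assumes "is_partition lam" "in_diagram lam (x,z1)" "in_diagram lam (x,z2)" "z1 \<le> z2"
  shows "hook lam (x,z2) \<le> hook lam (x,z1)"
  using hook_dec[OF assms(1,2,3)] assms(4) by (cases "z1 = z2") auto

lemma shift:
  assumes P: "is_partition lam" and C: "is_core l lam"
    and B: "in_diagram lam (x,y)" and G: "hook lam (x,y) > l" and L: "1 \<le> l"
  shows "\<exists>z. y < z \<and> z \<le> row lam x \<and> hook lam (x,z) = hook lam (x,y) - l"
proof (rule ccontr)
  assume NZ: "\<not> ?thesis"
  define t where "t = hook lam (x,y) - l"
  have t0: "0 < t" using G t_def by simp
  define Z where "Z = {z. y \<le> z \<and> z \<le> row lam x \<and> hook lam (x,z) > t}"
  have yZ: "y \<in> Z" using B G L unfolding Z_def t_def in_diagram_def by auto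
  have fZ: "finite Z" unfolding Z_def by auto
  define z0 where "z0 = Max Z"
  have z0Z: "z0 \<in> Z" using yZ fZ z0_def Max_in by blast
  have z0max: "\<And>z. z \<in> Z \<Longrightarrow> z \<le> z0" using fZ z0_def by simp
  have x1: "1 \<le> x" and y1: "1 \<le> y" using B unfolding in_diagram_def by auto
  have yz0: "y \<le> z0" and z0r: "z0 \<le> row lam x" and hz0: "hook lam (x,z0) > t"
    using z0Z unfolding Z_def by auto
  have Bz0: "in_diagram lam (x,z0)" using x1 y1 yz0 z0r unfolding in_diagram_def by auto
  define x' where "x' = x + t + z0 - row lam x"
  have up: "x' \<le> col lam z0" using hook_int[OF P Bz0] hz0 z0r unfolding x'_def by linarith
  have low: "col lam (z0+1) < x'"
  proof (cases "z0 < row lam x")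
    case True
    have Bz1: "in_diagram lam (x,z0+1)" using True x1 unfolding in_diagram_def by auto
    have "z0 + 1 \<notin> Z" using z0max by fastforce
    then have "hook lam (x,z0+1) \<le> t" using True yz0 unfolding Z_def by auto
    moreover have "hook lam (x,z0+1) \<noteq> t" using NZ True yz0 unfolding t_def by force
    ultimately have "hook lam (x,z0+1) < t" by simp
    then show ?thesis using hook_int[OF P Bz1] True unfolding x'_def by linarith
  next
    case False
    then have "z0 = row lam x" using z0r by simp
    moreover have "\<not> x \<le> col lam (row lam x + 1)" using conj[OF P x1, of "row lam x + 1"] by simp
    ultimately show ?thesis using t0 unfolding x'_def by simp
  qed
  have x'1: "1 \<le> x'" using low by simp
  have "z0 \<le> row lam x'" using conj[OF P x'1, of z0] up y1 yz0 by simp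
  moreover have "\<not> z0 + 1 \<le> row lam x'" using conj[OF P x'1, of "z0+1"] low by simp
  ultimately have rx': "row lam x' = z0" by simp
  have Bx': "in_diagram lam (x',y)" using x'1 y1 yz0 rx' unfolding in_diagram_def by simp
  have "int (hook lam (x',y)) = int l"
  proof -
    have "int x' = int x + int t + int z0 - int (row lam x)" using x'1 unfolding x'_def by (simp add: of_nat_diff)
    moreover have "int t = int (hook lam (x,y)) - int l" unfolding t_def using G by simp
    ultimately show ?thesis using hook_int[OF P Bx'] hook_int[OF P B] rx' by linarith
  qed
  then have "hook lam (x',y) = l" by simp
  then show False using C Bx' unfolding is_core_def by (metis dvd_refl)
qed

lemma del_char:
  assumes P: "is_partition lam" and B: "in_diagram lam (x,z)"
  shows "z \<in> deleted_cols l lam \<longleftrightarrow> hook lam (x,z) mod l = hook lam (x,1) mod l"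
proof -
  have x1: "1 \<le> x" and z1: "1 \<le> z" and zr: "z \<le> row lam x" using B unfolding in_diagram_def by auto
  have rr: "row lam x \<le> row lam 1" using row_mono[OF P, of 1 x] x1 by simp
  have B1: "in_diagram lam (x,1)" using B unfolding in_diagram_def by auto
  have B1z: "in_diagram lam (1,z)" using B rr unfolding in_diagram_def by auto
  have B11: "in_diagram lam (1,1)" using B rr unfolding in_diagram_def by auto
  define c where "c = int (row lam 1) - int (row lam x) + int x - 1"
  have e1: "int (hook lam (1,z)) = int (hook lam (x,z)) + c"
    using hook_int[OF P B] hook_int[OF P B1z] unfolding c_def by linarith
  have e2: "int (hook lam (1,1)) = int (hook lam (x,1)) + c"
    using hook_int[OF P B1] hook_int[OF P B11] unfolding c_def by linarith
  have "hook lam (1,z) mod l = hook lam (1,1) mod l \<longleftrightarrow> hook lam (x,z) mod l = hook lam (x,1) mod l"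
  proof -
    have "hook lam (1,z) mod l = hook lam (1,1) mod l \<longleftrightarrow>
          int (hook lam (1,z)) mod int l = int (hook lam (1,1)) mod int l"
      by (metis of_nat_eq_iff zmod_int)
    also have "\<dots> \<longleftrightarrow> int l dvd int (hook lam (1,z)) - int (hook lam (1,1))"
      by (rule mod_eq_dvd_iff)
    also have "\<dots> \<longleftrightarrow> int l dvd int (hook lam (x,z)) - int (hook lam (x,1))"
      using e1 e2 by simp
    also have "\<dots> \<longleftrightarrow> int (hook lam (x,z)) mod int l = int (hook lam (x,1)) mod int l"
      by (rule mod_eq_dvd_iff[symmetric])
    also have "\<dots> \<longleftrightarrow> hook lam (x,z) mod l = hook lam (x,1) mod l"
      by (metis of_nat_eq_iff zmod_int)
    finally show ?thesis .
  qed
  then show ?thesis using z1 zr rr unfolding deleted_cols_def by auto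
qed

lemma row_chain:
  assumes P: "is_partition lam" and C: "is_core l lam" and L: "1 \<le> l"
    and x: "1 \<le> x" "x \<le> length lam"
  shows "n * l < hook lam (x,1) \<Longrightarrow> \<exists>z. 1 \<le> z \<and> z \<le> row lam x \<and> hook lam (x,z) = hook lam (x,1) - n * l"
proof (induction n)
  case 0
  then show ?case using row_pos[OF P x] by auto
next
  case (Suc n)
  then obtain z where z: "1 \<le> z" "z \<le> row lam x" "hook lam (x,z) = hook lam (x,1) - n * l" by auto
  have Bz: "in_diagram lam (x,z)" using z x unfolding in_diagram_def by auto
  have "hook lam (x,z) > l" using z(3) Suc.prems by simp
  then obtain z' where "z < z'" "z' \<le> row lam x" "hook lam (x,z') = hook lam (x,z) - l"
    using shift[OF P C Bz _ L] by blast
  then show ?case using z by (intro exI[of _ z']) (auto simp: diff_diff_add)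
qed

lemma part1:
  assumes P: "is_partition lam" and C: "is_core l lam" and L: "1 \<le> l"
    and x: "1 \<le> x" "x \<le> length lam"
  shows "\<exists>!y. y \<in> deleted_cols l lam \<and> in_diagram lam (x, y) \<and> skew_box l lam (x, y)"
proof -
  define H where "H = hook lam (x,1)"
  have B1: "in_diagram lam (x,1)" using row_pos[OF P x] x unfolding in_diagram_def by auto
  have nd: "H mod l \<noteq> 0" using C B1 unfolding is_core_def H_def by (metis dvd_eq_mod_eq_0)
  have "(H div l) * l < H" using nd
    by (metis div_mult_mod_eq less_add_same_cancel1 not_gr_zero)
  then obtain z where z: "1 \<le> z" "z \<le> row lam x" "hook lam (x,z) = H - (H div l) * l"
    using row_chain[OF P C L x] unfolding H_def by blast
  have hz: "hook lam (x,z) = H mod l" using z(3) by (simp add: minus_div_mult_eq_mod)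
  have Bz: "in_diagram lam (x,z)" using z x unfolding in_diagram_def by auto
  have ex: "z \<in> deleted_cols l lam \<and> in_diagram lam (x, z) \<and> skew_box l lam (x, z)"
    using del_char[OF P Bz, of l] hz Bz L unfolding skew_box_def H_def
    by (simp add: less_imp_le)
  have small: "hook lam (x,w) = H mod l" if "w \<in> deleted_cols l lam" "in_diagram lam (x, w)" "skew_box l lam (x, w)" for w
  proof -
    have m: "hook lam (x,w) mod l = H mod l" using del_char[OF P that(2), of l] that(1) unfolding H_def by simp
    have "hook lam (x,w) \<le> l" using that(3) unfolding skew_box_def by simp
    moreover have "hook lam (x,w) \<noteq> l" using C that(2) unfolding is_core_def by (metis dvd_refl)
    ultimately have "hook lam (x,w) < l" by simp
    then show ?thesis using m by simp
  qed
  show ?thesis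
  proof (rule ex1I[of _ z])
    show "z \<in> deleted_cols l lam \<and> in_diagram lam (x, z) \<and> skew_box l lam (x, z)" by (rule ex)
  next
    fix w assume w: "w \<in> deleted_cols l lam \<and> in_diagram lam (x, w) \<and> skew_box l lam (x, w)"
    then have hw: "hook lam (x,w) = hook lam (x,z)" using small hz by auto
    show "w = z"
    proof (rule ccontr)
      assume "w \<noteq> z"
      then consider "w < z" | "z < w" by linarith
      then show False
        using hook_dec[OF P w[THEN conjunct2, THEN conjunct1] Bz] hook_dec[OF P Bz w[THEN conjunct2, THEN conjunct1]] hw
        by cases auto
    qed
  qed
qed

definition FF :: "nat set \<Rightarrow> nat \<Rightarrow> nat" where
  "FF D r = card ({1..r} - D)"

lemma FF_eq:
  assumes "0 \<notin> D" shows "r - card {z \<in> D. z \<le> r} = FF D r"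
proof -
  have "{z \<in> D. z \<le> r} = {1..r} \<inter> D" using assms by (auto simp: Suc_le_eq) (metis neq0_conv)
  then show ?thesis unfolding FF_def by (simp add: card_Diff_subset_Int)
qed

lemma FF_mono: "a \<le> b \<Longrightarrow> FF D a \<le> FF D b"
  unfolding FF_def by (rule card_mono) auto

lemma FF_strict: "a < b \<Longrightarrow> b \<notin> D \<Longrightarrow> FF D a < FF D b"
  unfolding FF_def
proof (rule psubset_card_mono)
  assume "a < b" "b \<notin> D"
  then have "b \<in> {1..b} - D" "b \<notin> {1..a} - D" by auto
  moreover have "{1..a} - D \<subseteq> {1..b} - D" using \<open>a < b\<close> by auto
  ultimately show "{1..a} - D \<subset> {1..b} - D" by blast
qed auto

lemma FF_diff: "a \<le> b \<Longrightarrow> FF D b = FF D a + card ({a<..b} - D)"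
proof -
  assume ab: "a \<le> b"
  have "{1..b} - D = ({1..a} - D) \<union> ({a<..b} - D)" using ab by auto
  moreover have "({1..a} - D) \<inter> ({a<..b} - D) = {}" by auto
  ultimately show ?thesis unfolding FF_def by (simp add: card_Un_disjoint)
qed

lemma FF_diff_le: "FF D b \<le> FF D a + (b - a)"
proof (cases "a \<le> b")
  case True
  have "card ({a<..b} - D) \<le> card {a<..b}" by (rule card_mono) auto
  then show ?thesis using FF_diff[OF True, of D] by simp
next
  case False then show ?thesis using FF_mono[of b a D] by simp
qed

lemma part2:
  assumes P: "is_partition lam" and C: "is_core l lam" and L: "1 \<le> l"
    and B: "in_diagram lam (x,y)" and yD: "y \<notin> deleted_cols l lam"
  shows "skew_box l lam (x, y) \<longleftrightarrow> skew_box (l - 1) (phi_tilde l lam) (box_map l lam (x, y))"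
proof -
  define D where "D = deleted_cols l lam"
  define mu where "mu = phi_tilde l lam"
  have D0: "0 \<notin> D" unfolding D_def deleted_cols_def by auto
  have x1: "1 \<le> x" and y1: "1 \<le> y" and yr: "y \<le> row lam x" using B unfolding in_diagram_def by auto
  have xl: "x \<le> length lam" using yr y1 unfolding row_def by (auto split: if_splits)
  have mu_eq: "mu = map (FF D) lam"
    unfolding mu_def phi_tilde_def D_def[symmetric] using FF_eq[OF D0] by simp
  have rowmu: "row mu x = FF D (row lam x)" using x1 xl unfolding mu_eq row_def by simp
  have "{z \<in> D. z < y} = {z \<in> D. z \<le> y}" using yD D_def by (auto simp: le_less)
  then have bm: "box_map l lam (x,y) = (x, FF D y)"
    unfolding box_map_def D_def[symmetric] using FF_eq[OF D0, of y] by simp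
  have iff: "FF D y \<le> FF D r \<longleftrightarrow> y \<le> r" for r
    using FF_mono[of y r D] FF_strict[of r y D] yD D_def by (meson not_le)
  have colmu: "col mu (FF D y) = col lam y"
    unfolding col_def mu_eq filter_map by (simp add: comp_def iff)
  have Fy1: "1 \<le> FF D y" using FF_strict[of 0 y D] yD y1 D_def unfolding FF_def by simp
  have Bmu: "in_diagram mu (x, FF D y)"
    using x1 Fy1 FF_mono[OF yr, of D] rowmu unfolding in_diagram_def by simp
  have xc: "x \<le> col lam y" using conj[OF P x1 y1] yr by simp
  have hmu: "hook mu (x, FF D y) = FF D (row lam x) - FF D y + 1 + (col lam y - x)"
    unfolding hook_def using rowmu colmu by simp
  have hl: "hook lam (x,y) = row lam x - y + 1 + (col lam y - x)" unfolding hook_def by simp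
  have "FF D (row lam x) \<le> FF D y + (row lam x - y)" by (rule FF_diff_le)
  then have le: "hook mu (x, FF D y) \<le> hook lam (x,y)" using hmu hl by linarith
  have nl: "hook lam (x,y) \<noteq> l" using C B unfolding is_core_def by (metis dvd_refl)
  show ?thesis
  proof
    assume "skew_box l lam (x, y)"
    then have "hook lam (x,y) \<le> l" unfolding skew_box_def by simp
    then have "hook lam (x,y) \<le> l - 1" using nl by linarith
    then show "skew_box (l - 1) (phi_tilde l lam) (box_map l lam (x, y))"
      using le Bmu unfolding bm skew_box_def mu_def[symmetric] by simp
  next
    assume S: "skew_box (l - 1) (phi_tilde l lam) (box_map l lam (x, y))"
    then have hs: "hook mu (x, FF D y) \<le> l - 1" unfolding bm skew_box_def mu_def[symmetric] by simp
    show "skew_box l lam (x, y)"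
    proof (rule ccontr)
      assume "\<not> skew_box l lam (x, y)"
      then have G: "hook lam (x,y) > l" using B unfolding skew_box_def by simp
      then obtain z where z: "y < z" "z \<le> row lam x" "hook lam (x,z) = hook lam (x,y) - l"
        using shift[OF P C B G L] by blast
      have Bz: "in_diagram lam (x,z)" using z x1 y1 unfolding in_diagram_def by auto
      have one: "card ({y<..z} \<inter> D) \<le> 1"
      proof -
        have "\<forall>a1\<in>{y<..z} \<inter> D. \<forall>a2\<in>{y<..z} \<inter> D. a1 = a2"
        proof (intro ballI, rule ccontr)
          fix a1 a2 assume a: "a1 \<in> {y<..z} \<inter> D" "a2 \<in> {y<..z} \<inter> D" "a1 \<noteq> a2"
          have g: "hook lam (x,w) < hook lam (x,w') \<and> hook lam (x,w') < hook lam (x,w) + l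
                   \<and> hook lam (x,w) mod l = hook lam (x,w') mod l"
            if w: "w \<in> {y<..z} \<inter> D" "w' \<in> {y<..z} \<inter> D" "w' < w" for w w'
          proof -
            have Bw: "in_diagram lam (x,w)" "in_diagram lam (x,w')" using w z x1 y1 unfolding in_diagram_def by auto
            have "hook lam (x,w) < hook lam (x,w')" using hook_dec[OF P Bw(2) Bw(1)] w(3) .
            moreover have "hook lam (x,w') < hook lam (x,y)" using hook_dec[OF P B Bw(2)] w(2) by simp
            moreover have "hook lam (x,z) \<le> hook lam (x,w)" using hook_le[OF P Bw(1) Bz] w(1) by simp
            moreover have "hook lam (x,w) mod l = hook lam (x,w') mod l"
              using del_char[OF P Bw(1), of l] del_char[OF P Bw(2), of l] w D_def by simp
            ultimately show ?thesis using z(3) G by linarith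
          qed
          have "\<exists>w w'. w \<in> {y<..z} \<inter> D \<and> w' \<in> {y<..z} \<inter> D \<and> w' < w" using a
            by (metis linorder_neqE_nat)
          then obtain w w' where ww: "w \<in> {y<..z} \<inter> D" "w' \<in> {y<..z} \<inter> D" "w' < w" by blast
          note gg = g[OF ww]
          then have "l dvd hook lam (x,w') - hook lam (x,w)"
            using mod_eq_dvd_iff_nat[of "hook lam (x,w)" "hook lam (x,w')" l] by simp
          moreover have "0 < hook lam (x,w') - hook lam (x,w)" "hook lam (x,w') - hook lam (x,w) < l"
            using gg by auto
          ultimately show False using nat_dvd_not_less by blast
        qed
        then have "card ({y<..z} \<inter> D) \<le> Suc 0" by (subst card_le_Suc0_iff_eq) auto
        then show ?thesis by simp
      qed
      have "card ({y<..z} - D) = card {y<..z} - card ({y<..z} \<inter> D)"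
        by (rule card_Diff_subset_Int) auto
      then have c1: "z - y - 1 \<le> card ({y<..z} - D)" using one by simp
      have "card ({y<..z} - D) \<le> card ({y<..row lam x} - D)" by (rule card_mono) (use z in auto)
      then have "FF D y + (z - y - 1) \<le> FF D (row lam x)" using FF_diff[OF yr, of D] c1 by simp
      then have "z - y - 1 + 1 + (col lam y - x) \<le> hook mu (x, FF D y)" using hmu FF_mono[OF yr, of D] by linarith
      moreover have "int (hook lam (x,y)) - int (hook lam (x,z)) = int z - int y + int (col lam y) - int (col lam z)"
        using hook_int[OF P B] hook_int[OF P Bz] by simp
      moreover have "x \<le> col lam z" using conj[OF P x1, of z] z y1 by simp
      ultimately show False using hs z G xc L by linarith
    qed
  qed
qed

theorem mainTheorem9:
  fixes l k :: nat and lam :: "nat list"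
  assumes "l \<ge> 2" and "k \<ge> 1"
    and "is_partition lam" and "length lam = k"
    and "is_core l lam"
  shows "(\<forall>x. 1 \<le> x \<and> x \<le> k \<longrightarrow>
            (\<exists>!y. y \<in> deleted_cols l lam \<and> in_diagram lam (x, y) \<and> skew_box l lam (x, y)))
       \<and> (\<forall>x y. in_diagram lam (x, y) \<and> y \<notin> deleted_cols l lam \<longrightarrow>
            (skew_box l lam (x, y) \<longleftrightarrow>
             skew_box (l - 1) (phi_tilde l lam) (box_map l lam (x, y))))"
proof -
  have L: "1 \<le> l" using assms(1) by simp
  show ?thesis
    using part1[OF assms(3) assms(5) L] part2[OF assms(3) assms(5) L] assms(4) by blast
qed

end
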